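(* Let $(f_n)_{n\ge 0}$ be a sequence of positive real numbers such that $\{f_n/f_{n-1}\}_{n\ge1}$ is decreasing, and let $f(a,x)=\sum_{n=0}^{\infty} f_n\frac{(a)_n}{n!}x^n$. Then for $b>a>0$, $\delta>0$ and $x>0$, \[ \frac{\Gamma(a+\delta)\Gamma(b)}{\Gamma(b+\delta)\Gamma(a)}<\frac{f(b+\delta,x)f(a,x)}{f(a+\delta,x)f(b,x)}<1. \]
   Context: $(a)_n=a(a+1)\cdots(a+n-1)$ is the Pochhammer symbol; $\Gamma$ is Euler's gamma function. The inequality is asserted for $x>0$ at which the series converge. *)

theory Defs
  imports "HOL-Analysis.Analysis"
begin

definition hyp_series :: "(nat \<Rightarrow> real) \<Rightarrow> real \<Rightarrow> real \<Rightarrow> nat \<Rightarrow> real" where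
  "hyp_series c a x n = c n * (pochhammer a n / fact n) * x ^ n"

definition hypF :: "(nat \<Rightarrow> real) \<Rightarrow> real \<Rightarrow> real \<Rightarrow> real" where
  "hypF c a x = (\<Sum>n. hyp_series c a x n)"

end

theory Submission
  imports Defs
begin

lemma cheb_step:
  fixes p q g :: "nat \<Rightarrow> real"
  shows "(\<Sum>j<Suc N. p j * g j) * (\<Sum>j<Suc N. q j) - (\<Sum>j<Suc N. q j * g j) * (\<Sum>j<Suc N. p j)
    = (\<Sum>j<N. p j * g j) * (\<Sum>j<N. q j) - (\<Sum>j<N. q j * g j) * (\<Sum>j<N. p j)
      + (\<Sum>j<N. (g j - g N) * (p j * q N - q j * p N))"
  by (simp add: algebra_simps sum_distrib_left sum_distrib_right sum_subtractf sum.distrib)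

lemma cheb:
  fixes p q g :: "nat \<Rightarrow> real"
  assumes g: "\<And>j k. j < k \<Longrightarrow> g k \<le> g j"
    and lr: "\<And>j k. j < k \<Longrightarrow> q j * p k \<le> p j * q k"
    and s: "summable p" "summable q" "summable (\<lambda>n. p n * g n)" "summable (\<lambda>n. q n * g n)"
  shows "(\<Sum>n. q n * g n) * (\<Sum>n. p n) + (g 0 - g 1) * (p 0 * q 1 - q 0 * p 1)
     \<le> (\<Sum>n. p n * g n) * (\<Sum>n. q n)"
proof -
  define D where "D N = (\<Sum>j<N. p j * g j) * (\<Sum>j<N. q j) - (\<Sum>j<N. q j * g j) * (\<Sum>j<N. p j)" for N
  have step: "D (Suc N) = D N + (\<Sum>j<N. (g j - g N) * (p j * q N - q j * p N))" for N
    unfolding D_def by (rule cheb_step)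
  have nn: "0 \<le> (\<Sum>j<N. (g j - g N) * (p j * q N - q j * p N))" for N
    by (intro sum_nonneg mult_nonneg_nonneg) (use g lr in auto)
  have mono: "incseq D"
    by (intro incseq_SucI) (use step nn in auto)
  have D2: "D 2 = (g 0 - g 1) * (p 0 * q 1 - q 0 * p 1)"
    unfolding D_def by (simp add: numeral_2_eq_2 algebra_simps)
  have lim: "D \<longlonglongrightarrow> (\<Sum>n. p n * g n) * (\<Sum>n. q n) - (\<Sum>n. q n * g n) * (\<Sum>n. p n)"
    unfolding D_def using s
    by (intro tendsto_intros summable_LIMSEQ)
  have "D 2 \<le> (\<Sum>n. p n * g n) * (\<Sum>n. q n) - (\<Sum>n. q n * g n) * (\<Sum>n. p n)"
    by (rule LIMSEQ_le_const[OF lim]) (use mono in \<open>auto simp: incseq_def\<close>)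
  then show ?thesis using D2 by simp
qed

lemma pochhammer_mono_arg:
  fixes a b :: real
  assumes "0 < a" "a \<le> b"
  shows "pochhammer a m \<le> pochhammer b m"
proof (induction m)
  case (Suc m)
  then show ?case using assms
    by (auto simp: pochhammer_Suc intro!: mult_mono pochhammer_nonneg)
qed simp

lemma poch_lr:
  fixes a b :: real
  assumes "0 < a" "a \<le> b" "j \<le> k"
  shows "pochhammer b j * pochhammer a k \<le> pochhammer a j * pochhammer b k"
proof -
  obtain m where k: "k = j + m" using assms by (metis le_add_diff_inverse)
  have "pochhammer (a + of_nat j) m \<le> pochhammer (b + of_nat j) m"
    by (rule pochhammer_mono_arg) (use assms in auto)
  then have "pochhammer b j * (pochhammer a j * pochhammer (a + of_nat j) m)
     \<le> pochhammer a j * (pochhammer b j * pochhammer (b + of_nat j) m)"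
    using assms by (auto intro!: mult_left_mono pochhammer_nonneg mult_nonneg_nonneg
        simp: mult.left_commute[of "pochhammer b j"])
  then show ?thesis unfolding k pochhammer_product' by simp
qed

lemma psi_mono:
  fixes y y' d :: real
  assumes "0 < y" "y < y'" "0 < d"
  shows "Gamma (y + d) / Gamma y < Gamma (y' + d) / Gamma y'"
proof -
  have "\<exists>\<xi>. y < \<xi> \<and> \<xi> < y' \<and> (ln_Gamma (y' + d) - ln_Gamma y') - (ln_Gamma (y + d) - ln_Gamma y)
      = (y' - y) * (Digamma (\<xi> + d) - Digamma \<xi>)"
    using assms
    by (intro MVT2[of y y' "\<lambda>z. ln_Gamma (z + d) - ln_Gamma z" "\<lambda>z. Digamma (z + d) - Digamma z"]
        derivative_eq_intros impI allI) (auto elim!: nonpos_Ints_cases)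
  then obtain \<xi> where xi: "y < \<xi>" "\<xi> < y'" and
    eq: "(ln_Gamma (y' + d) - ln_Gamma y') - (ln_Gamma (y + d) - ln_Gamma y)
      = (y' - y) * (Digamma (\<xi> + d) - Digamma \<xi>)" by blast
  have "Digamma \<xi> < Digamma (\<xi> + d)"
    using xi assms by (intro Digamma_real_strict_mono) auto
  then have "0 < (y' - y) * (Digamma (\<xi> + d) - Digamma \<xi>)" using assms by simp
  with eq have "ln (Gamma (y + d)) - ln (Gamma y) < ln (Gamma (y' + d)) - ln (Gamma y')"
    using assms xi by (simp add: ln_Gamma_real_pos)
  moreover have "Gamma (y + d) > 0" "Gamma y > 0" "Gamma (y' + d) > 0" "Gamma y' > 0"
    using assms by auto
  ultimately have "ln (Gamma (y + d) / Gamma y) < ln (Gamma (y' + d) / Gamma y')"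
    by (simp add: ln_div)
  then show ?thesis using \<open>Gamma y > 0\<close> \<open>Gamma y' > 0\<close> \<open>Gamma (y + d) > 0\<close> \<open>Gamma (y' + d) > 0\<close>
    by (subst (asm) ln_less_cancel_iff) auto
qed



lemma rearr:
  fixes T :: "nat \<times> nat \<Rightarrow> real"
  assumes nn: "\<And>z. 0 \<le> T z"
    and D: "(\<lambda>n. \<Sum>k\<le>n. T (k, n - k)) sums S"
  shows "((\<lambda>l. \<Sum>\<^sub>\<infinity>j. T (j, l)) has_sum S) UNIV" and "\<And>l. (\<lambda>j. T (j, l)) summable_on UNIV"
proof -
  define F where "F = (\<lambda>(n, k). T (k, n - k))"
  have inner: "((\<lambda>k. F (n, k)) has_sum (\<Sum>k\<le>n. T (k, n - k))) {..n}" for n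
    unfolding F_def by (simp add: has_sum_finite)
  have outer: "((\<lambda>n. \<Sum>k\<le>n. T (k, n - k)) has_sum S) UNIV"
    by (rule sums_nonneg_imp_has_sum[OF D]) (auto intro: sum_nonneg nn)
  have summ: "F summable_on Sigma UNIV atMost"
    by (rule summable_on_SigmaI[OF inner has_sum_imp_summable[OF outer]]) (auto simp: F_def nn)
  have hs: "(F has_sum S) (Sigma UNIV atMost)"
    by (rule has_sum_SigmaI[OF inner outer summ])
  have G: "((\<lambda>(l, j). T (j, l)) has_sum S) (Sigma UNIV (\<lambda>_. UNIV))"
  proof -
    have "((\<lambda>(l, j). T (j, l)) has_sum S) UNIV = (F has_sum S) (Sigma UNIV atMost)"
      by (rule has_sum_reindex_bij_witness[where i = "\<lambda>(n, k). (n - k, k)" and j = "\<lambda>(l, j). (j + l, j)"])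
         (auto simp: F_def)
    with hs show ?thesis by simp
  qed
  show summl: "(\<lambda>j. T (j, l)) summable_on UNIV" for l
    using summable_on_SigmaD1[of "\<lambda>l j. T (j, l)" UNIV "\<lambda>_. UNIV" l] has_sum_imp_summable[OF G]
    by (simp add: case_prod_unfold)
  show "((\<lambda>l. \<Sum>\<^sub>\<infinity>j. T (j, l)) has_sum S) UNIV"
    by (rule has_sum_Sigma'[OF G]) (use summl in \<open>auto intro: has_sum_infsum\<close>)
qed

definition PA :: "real \<Rightarrow> nat \<Rightarrow> real" where "PA t j = pochhammer t j / fact j"

definition NN :: "(nat \<Rightarrow> real) \<Rightarrow> real \<Rightarrow> real \<Rightarrow> nat \<Rightarrow> real" where
  "NN c t x l = (\<Sum>j. PA t j * c (j + l) * x ^ (j + l))"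

lemma vander:
  fixes t d :: real
  shows "pochhammer (t + d) n / fact n = (\<Sum>k\<le>n. PA t k * PA d (n - k))"
proof -
  have "pochhammer (t + d) n / fact n
      = (\<Sum>k\<le>n. of_nat (n choose k) * pochhammer t k * pochhammer d (n - k) / fact n)"
    by (simp add: pochhammer_binomial_sum sum_divide_distrib)
  also have "\<dots> = (\<Sum>k\<le>n. PA t k * PA d (n - k))"
    by (intro sum.cong refl) (simp add: binomial_fact PA_def field_simps)
  finally show ?thesis .
qed

lemma decomp:
  fixes c :: "nat \<Rightarrow> real" and t d x :: real
  assumes pos: "\<And>n. c n > 0" and t: "t > 0" and d: "d > 0" and x: "x > 0"
    and conv: "summable (hyp_series c (t + d) x)"
  shows "(\<lambda>l. PA d l * NN c t x l) sums hypF c (t + d) x"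
    and "\<And>l. summable (\<lambda>j. PA t j * c (j + l) * x ^ (j + l))"
proof -
  define T where "T = (\<lambda>(j, l). PA t j * PA d l * c (j + l) * x ^ (j + l))"
  have Tnn: "0 \<le> T z" for z
    using pos t d x by (auto simp: T_def PA_def case_prod_unfold intro!: less_imp_le divide_pos_pos mult_pos_pos pochhammer_pos)
  have eq: "hyp_series c (t + d) x n = (\<Sum>k\<le>n. T (k, n - k))" for n
  proof -
    have "hyp_series c (t + d) x n = (\<Sum>k\<le>n. c n * (PA t k * PA d (n - k)) * x ^ n)"
      unfolding hyp_series_def vander by (simp add: sum_distrib_left sum_distrib_right)
    also have "\<dots> = (\<Sum>k\<le>n. T (k, n - k))"
      by (intro sum.cong refl) (auto simp: T_def)
    finally show ?thesis .
  qed
  have D: "(\<lambda>n. \<Sum>k\<le>n. T (k, n - k)) sums hypF c (t + d) x"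
    using conv unfolding hypF_def eq[symmetric] by (rule summable_sums)
  note R = rearr[OF Tnn D]
  have PAd: "PA d l > 0" for l using d by (simp add: PA_def pochhammer_pos)
  have su: "(\<lambda>j. PA t j * c (j + l) * x ^ (j + l)) summable_on UNIV" for l
  proof -
    have "(\<lambda>j. (1 / PA d l) * T (j, l)) summable_on UNIV"
      by (rule summable_on_cmult_right[OF R(2)])
    moreover have "(\<lambda>j. (1 / PA d l) * T (j, l)) = (\<lambda>j. PA t j * c (j + l) * x ^ (j + l))"
      using PAd[of l] by (auto simp: T_def fun_eq_iff)
    ultimately show ?thesis by simp
  qed
  show sm: "summable (\<lambda>j. PA t j * c (j + l) * x ^ (j + l))" for l
    by (rule summable_on_imp_summable[OF su])
  have inf: "(\<Sum>\<^sub>\<infinity>j. T (j, l)) = PA d l * NN c t x l" for l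
  proof -
    have nn: "0 \<le> PA t j * c (j + l) * x ^ (j + l)" for j
      using pos t x by (auto simp: PA_def intro!: less_imp_le divide_pos_pos mult_pos_pos pochhammer_pos)
    have "((\<lambda>j. PA t j * c (j + l) * x ^ (j + l)) has_sum NN c t x l) UNIV"
      unfolding NN_def by (rule sums_nonneg_imp_has_sum[OF summable_sums[OF sm] nn])
    then have "((\<lambda>j. PA d l * (PA t j * c (j + l) * x ^ (j + l))) has_sum PA d l * NN c t x l) UNIV"
      by (rule has_sum_cmult_right)
    then show ?thesis by (intro infsumI) (simp add: T_def mult_ac)
  qed
  show "(\<lambda>l. PA d l * NN c t x l) sums hypF c (t + d) x"
    using has_sum_imp_sums[OF R(1)] by (simp add: inf)
qed



lemma hyp_pos:
  fixes c :: "nat \<Rightarrow> real"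
  assumes "\<And>n. c n > 0" "t > 0" "x > 0"
  shows "hyp_series c t x n > 0"
  using assms by (auto simp: hyp_series_def intro!: mult_pos_pos divide_pos_pos pochhammer_pos)

lemma hypF_pos:
  fixes c :: "nat \<Rightarrow> real"
  assumes "\<And>n. c n > 0" "t > 0" "x > 0" "summable (hyp_series c t x)"
  shows "hypF c t x > 0"
  unfolding hypF_def using assms by (intro suminf_pos hyp_pos) auto

lemma lr_hyp:
  fixes c :: "nat \<Rightarrow> real"
  assumes pos: "\<And>n. c n > 0" and "0 < a" "a \<le> b" "x > 0" "j \<le> k"
  shows "hyp_series c b x j * hyp_series c a x k \<le> hyp_series c a x j * hyp_series c b x k"
proof -
  have "pochhammer b j * pochhammer a k / (fact j * fact k) * (c j * x ^ j * (c k * x ^ k))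
      \<le> pochhammer a j * pochhammer b k / (fact j * fact k) * (c j * x ^ j * (c k * x ^ k))"
    using poch_lr[OF assms(2,3,5)] pos assms(4)
    by (intro mult_right_mono divide_right_mono) (auto intro!: mult_nonneg_nonneg less_imp_le)
  then show ?thesis by (simp add: hyp_series_def field_simps)
qed

lemma hyp_psi:
  fixes t d :: real
  assumes "t > 0" "d > 0"
  shows "pochhammer t n * (Gamma (t + real n + d) / Gamma (t + real n))
       = Gamma (t + d) / Gamma t * pochhammer (t + d) n"
proof -
  have nt: "t \<notin> \<int>\<^sub>\<le>\<^sub>0" "t + d \<notin> \<int>\<^sub>\<le>\<^sub>0" using assms by (auto elim!: nonpos_Ints_cases)
  have "Gamma (t + real n) > 0" "Gamma t > 0" "Gamma (t + d) > 0" using assms by auto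
  moreover have "pochhammer t n = Gamma (t + real n) / Gamma t"
    by (rule pochhammer_Gamma[OF nt(1)])
  moreover have "pochhammer (t + d) n = Gamma (t + real n + d) / Gamma (t + d)"
    using pochhammer_Gamma[OF nt(2), of n] by (simp add: ac_simps)
  ultimately show ?thesis by (simp add: field_simps)
qed

theorem corollary1:
  fixes c :: "nat \<Rightarrow> real" and a b \<delta> x :: real
  assumes pos: "\<And>n. c n > 0"
    and decr: "\<And>n. n \<ge> 1 \<Longrightarrow> c (n + 1) / c n < c n / c (n - 1)"
    and ab: "b > a" "a > 0" and \<delta>: "\<delta> > 0" and x: "x > 0"
    and conv: "summable (hyp_series c a x)" "summable (hyp_series c b x)"
      "summable (hyp_series c (a + \<delta>) x)" "summable (hyp_series c (b + \<delta>) x)"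
  shows "Gamma (a + \<delta>) * Gamma b / (Gamma (b + \<delta>) * Gamma a)
           < hypF c (b + \<delta>) x * hypF c a x / (hypF c (a + \<delta>) x * hypF c b x)
         \<and> hypF c (b + \<delta>) x * hypF c a x / (hypF c (a + \<delta>) x * hypF c b x) < 1"
proof -
  define fa fb fad fbd where "fa = hypF c a x" "fb = hypF c b x"
    "fad = hypF c (a + \<delta>) x" "fbd = hypF c (b + \<delta>) x"
  have b0: "b > 0" using ab by simp
  have fpos: "fa > 0" "fb > 0" "fad > 0" "fbd > 0"
    unfolding fa_fb_fad_fbd_def using ab b0 \<delta> x conv pos
    by (auto intro!: hypF_pos)
  have lr: "hyp_series c b x j * hyp_series c a x k \<le> hyp_series c a x j * hyp_series c b x k"
    if "j < k" for j k
    using lr_hyp[OF pos ab(2) _ x] ab that by auto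
  define r where "r n = c (Suc n) / c n" for n
  have rdec: "decseq r"
  proof (rule decseq_SucI)
    fix n show "r (Suc n) \<le> r n"
      using decr[of "Suc n"] by (simp add: r_def)
  qed
  have r01: "r 1 < r 0" using decr[of 1] by (simp add: r_def numeral_2_eq_2)
  have upper: "fbd * fa < fad * fb"
  proof -
    define E where "E l = PA \<delta> l * (NN c a x l * fb - NN c b x l * fa)" for l
    note Da = decomp[OF pos ab(2) \<delta> x conv(3)]
    note Db = decomp[OF pos b0 \<delta> x conv(4)]
    have Es: "E sums (fad * fb - fbd * fa)"
    proof -
      have "(\<lambda>l. PA \<delta> l * NN c a x l * fb - PA \<delta> l * NN c b x l * fa) sums (fad * fb - fbd * fa)"
        unfolding fa_fb_fad_fbd_def by (intro sums_diff sums_mult2 Da(1) Db(1))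
      moreover have "E = (\<lambda>l. PA \<delta> l * NN c a x l * fb - PA \<delta> l * NN c b x l * fa)"
        by (simp add: E_def fun_eq_iff algebra_simps)
      ultimately show ?thesis by simp
    qed
    have key: "NN c b x l * fa + (g 0 - g 1) * (hyp_series c a x 0 * hyp_series c b x 1 - hyp_series c b x 0 * hyp_series c a x 1)
          \<le> NN c a x l * fb" if gdef: "g = (\<lambda>j. c (j + l) * x ^ l / c j)" for g l
    proof -
      have gstep: "g (Suc j) \<le> g j" for j
      proof -
        have "r (j + l) \<le> r j" using decseqD[OF rdec, of j "j + l"] by simp
        then have "c (Suc j + l) * c j \<le> c (j + l) * c (Suc j)"
          using pos[of j] pos[of "j + l"] by (simp add: r_def divide_simps mult_ac)
        then have "c (Suc j + l) * c j * (x ^ l / (c j * c (Suc j))) \<le> c (j + l) * c (Suc j) * (x ^ l / (c j * c (Suc j)))"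
          using pos[of j] pos[of "Suc j"] x by (intro mult_right_mono) auto
        then show ?thesis using pos[of j] pos[of "Suc j"] by (simp add: gdef field_simps)
      qed
      have gmono: "g k \<le> g j" if "j < k" for j k
        using decseqD[OF decseq_SucI[of g, OF gstep], of j k] that by simp
      have pg: "hyp_series c t x j * g j = PA t j * c (j + l) * x ^ (j + l)" for t j
        using pos[of j] by (simp add: gdef hyp_series_def PA_def power_add field_simps)
      have sp: "summable (\<lambda>n. hyp_series c a x n * g n)" "summable (\<lambda>n. hyp_series c b x n * g n)"
        using Da(2)[of l] Db(2)[of l] by (simp_all add: pg)
      have "(\<Sum>n. hyp_series c b x n * g n) * (\<Sum>n. hyp_series c a x n) + (g 0 - g 1) *
          (hyp_series c a x 0 * hyp_series c b x 1 - hyp_series c b x 0 * hyp_series c a x 1)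
          \<le> (\<Sum>n. hyp_series c a x n * g n) * (\<Sum>n. hyp_series c b x n)"
        by (rule cheb[OF gmono lr conv(1,2) sp])
      then show ?thesis by (simp add: pg NN_def fa_fb_fad_fbd_def hypF_def)
    qed
    have Enn: "E l \<ge> 0" for l
    proof -
      define g where "g = (\<lambda>j. c (j + l) * x ^ l / c j)"
      have "g 1 \<le> g 0"
      proof -
        have "r (0 + l) \<le> r 0" using decseqD[OF rdec, of 0 l] by simp
        then have "c (Suc l) * c 0 \<le> c l * c 1"
          using pos[of 0] pos[of l] by (simp add: r_def divide_simps mult_ac)
        then have "c (Suc l) * c 0 * (x ^ l / (c 0 * c 1)) \<le> c l * c 1 * (x ^ l / (c 0 * c 1))"
          using pos[of 0] pos[of 1] x by (intro mult_right_mono) auto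
        then show ?thesis using pos[of 0] pos[of 1] by (simp add: g_def field_simps)
      qed
      moreover have "0 \<le> hyp_series c a x 0 * hyp_series c b x 1 - hyp_series c b x 0 * hyp_series c a x 1"
        using lr[of 0 1] by simp
      ultimately have "NN c b x l * fa \<le> NN c a x l * fb"
        using key[OF g_def] by (smt (verit) mult_nonneg_nonneg)
      moreover have "PA \<delta> l > 0" using \<delta> by (simp add: PA_def pochhammer_pos)
      ultimately show ?thesis by (simp add: E_def)
    qed
    have E1: "E 1 > 0"
    proof -
      define g where "g = (\<lambda>j. c (j + 1) * x ^ 1 / c j)"
      have "g 1 < g 0"
      proof -
        have "c 2 * c 0 < c 1 * c 1"
          using r01 pos[of 0] pos[of 1] by (simp add: r_def divide_simps numeral_2_eq_2)
        then have "c 2 * c 0 * (x / (c 0 * c 1)) < c 1 * c 1 * (x / (c 0 * c 1))"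
          using pos[of 0] pos[of 1] x by (intro mult_strict_right_mono) auto
        then show ?thesis using pos[of 0] pos[of 1] by (simp add: g_def field_simps numeral_2_eq_2)
      qed
      moreover have "0 < hyp_series c a x 0 * hyp_series c b x 1 - hyp_series c b x 0 * hyp_series c a x 1"
      proof -
        have "hyp_series c a x 0 * hyp_series c b x 1 - hyp_series c b x 0 * hyp_series c a x 1
            = c 0 * c 1 * x * (b - a)" by (simp add: hyp_series_def algebra_simps)
        also have "\<dots> > 0" using pos[of 0] pos[of 1] x ab by simp
        finally show ?thesis .
      qed
      ultimately have "NN c b x 1 * fa < NN c a x 1 * fb"
        using key[OF g_def] by (smt (verit) mult_pos_pos)
      moreover have "PA \<delta> 1 > 0" using \<delta> by (simp add: PA_def)
      ultimately show ?thesis by (simp add: E_def)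
    qed
    have "0 < suminf E"
      by (rule suminf_pos2[OF sums_summable[OF Es] Enn E1])
    then show ?thesis using sums_unique[OF Es] by simp
  qed
  define psi where "psi t n = Gamma (t + real n + \<delta>) / Gamma (t + real n)" for t n
  define Ka Kb where "Ka = Gamma (a + \<delta>) / Gamma a" "Kb = Gamma (b + \<delta>) / Gamma b"
  have psi_pos: "psi t n > 0" if "t > 0" for t n using that \<delta> by (simp add: psi_def)
  have hp: "hyp_series c t x n * psi t n = Gamma (t + \<delta>) / Gamma t * hyp_series c (t + \<delta>) x n"
    if "t > 0" for t n
  proof -
    have "hyp_series c t x n * psi t n = c n / fact n * x ^ n * (pochhammer t n * psi t n)"
      by (simp add: hyp_series_def)
    also have "\<dots> = c n / fact n * x ^ n * (Gamma (t + \<delta>) / Gamma t * pochhammer (t + \<delta>) n)"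
      unfolding psi_def by (subst hyp_psi[OF that \<delta>]) simp
    finally show ?thesis by (simp add: hyp_series_def mult_ac)
  qed
  have sa: "summable (\<lambda>n. hyp_series c a x n * psi a n)"
    using summable_mult[OF conv(3), of Ka] by (simp add: hp[OF ab(2)] Ka_Kb_def)
  have sb: "summable (\<lambda>n. hyp_series c b x n * psi b n)"
    using summable_mult[OF conv(4), of Kb] by (simp add: hp[OF b0] Ka_Kb_def)
  have psi_lt: "psi a n < psi b n" for n
    unfolding psi_def using psi_mono[of "a + real n" "b + real n" \<delta>] ab \<delta> by simp
  have hb: "hyp_series c b x n > 0" for n by (rule hyp_pos) (use pos b0 x in auto)
  have sba: "summable (\<lambda>n. hyp_series c b x n * psi a n)"
  proof (rule summable_comparison_test'[OF sb])
    fix n :: nat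
    show "norm (hyp_series c b x n * psi a n) \<le> hyp_series c b x n * psi b n"
      using hb[of n] psi_pos[OF ab(2), where n=n] psi_lt[where n=n] by simp
  qed
  have gmono: "- psi a k \<le> - psi a j" if "j < k" for j k
    unfolding psi_def using psi_mono[of "a + real j" "a + real k" \<delta>] ab \<delta> that by simp
  have ch: "(\<Sum>n. hyp_series c b x n * - psi a n) * fa + (- psi a 0 - - psi a 1) *
      (hyp_series c a x 0 * hyp_series c b x 1 - hyp_series c b x 0 * hyp_series c a x 1)
      \<le> (\<Sum>n. hyp_series c a x n * - psi a n) * fb"
    unfolding fa_fb_fad_fbd_def hypF_def
    by (rule cheb[OF gmono lr conv(1,2)]) (use sa sba in \<open>simp_all add: summable_minus_iff\<close>)
  have nn: "0 \<le> (- psi a 0 - - psi a 1) *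
      (hyp_series c a x 0 * hyp_series c b x 1 - hyp_series c b x 0 * hyp_series c a x 1)"
    using gmono[of 0 1] lr[of 0 1] by (intro mult_nonneg_nonneg) auto
  have suma: "(\<Sum>n. hyp_series c a x n * psi a n) = Ka * fad"
    unfolding fa_fb_fad_fbd_def hypF_def Ka_Kb_def hp[OF ab(2)] by (rule suminf_mult[OF conv(3)])
  have sumb: "(\<Sum>n. hyp_series c b x n * psi b n) = Kb * fbd"
    unfolding fa_fb_fad_fbd_def hypF_def Ka_Kb_def hp[OF b0] by (rule suminf_mult[OF conv(4)])
  have "(\<Sum>n. hyp_series c b x n * - psi a n) = - (\<Sum>n. hyp_series c b x n * psi a n)"
    using suminf_minus[OF sba] by simp
  moreover have "(\<Sum>n. hyp_series c a x n * - psi a n) = - (\<Sum>n. hyp_series c a x n * psi a n)"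
    using suminf_minus[OF sa] by simp
  ultimately have le1: "Ka * fad * fb \<le> (\<Sum>n. hyp_series c b x n * psi a n) * fa"
    using ch nn suma by simp
  have "0 < (\<Sum>n. hyp_series c b x n * psi b n - hyp_series c b x n * psi a n)"
    using hb psi_lt
    by (intro suminf_pos summable_diff sb sba) (simp add: algebra_simps)
  then have lt2: "(\<Sum>n. hyp_series c b x n * psi a n) < Kb * fbd"
    using suminf_diff[OF sb sba] sumb by simp
  have lower: "Ka * fad * fb < Kb * fbd * fa"
    using le1 mult_strict_right_mono[OF lt2 fpos(1)] by simp
  have Gp: "Gamma a > 0" "Gamma b > 0" "Gamma (a + \<delta>) > 0" "Gamma (b + \<delta>) > 0"
    using ab b0 \<delta> by auto
  have L: "Gamma (a + \<delta>) * Gamma b / (Gamma (b + \<delta>) * Gamma a) < fbd * fa / (fad * fb)"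
    using lower Gp fpos by (simp add: Ka_Kb_def divide_simps mult_ac)
  have U: "fbd * fa / (fad * fb) < 1"
    using upper fpos by simp
  show ?thesis using L U by (simp add: fa_fb_fad_fbd_def)
qed


end
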